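(* Let $m\le n/\log^2 n$ be a positive integer and consider the Move-to-the-Back Dealer $\mathcal D_m$ with parameters $k_1=n/(8e\log n)$, $\ell=m\log n$, $u=\ell$, $d=(k_1-2m\log n)/\ell$, and $k_i=k_1-(i-1)\ell$. For every Guesser with $m$ bits of memory and every epoch $i\in[d]$, the expected number $c_i$ of correct guesses during the $i$-th epoch satisfies $$c_i\le \frac{r_i}{k_i-\ell-u},$$ where $r_i$ is the expected number of reasonable guesses during the $i$-th epoch.
   Context: Card guessing game: a deck of $n$ distinct cards labeled $1,\dots,n$; $n$ turns; in each turn the Dealer selects a card from the remaining deck and places it face down, the Guesser names a card of $[n]$, and the card is revealed and discarded. A guess is correct if it equals the drawn card. A Guesser with $m$ bits of memory keeps a state in $\{0,1\}^m$ between turns and consists of a (possibly randomized) guessing function (state $\mapsto$ guess) and a (possibly randomized) state-transition function (state and revealed card $\mapsto$ new state); she may use unlimited randomness and computation. The Dealer $\mathcal D_m$ (rounding ignored): (1) while more than $k_1$ cards remain, it draws a uniformly random card of the remaining deck; (2) for $i=1,\dots,d$, the $i$-th epoch consists of the $\ell$ turns starting when $k_i$ cards remain; at the start of each epoch a set $B$ is set to $\emptyset$; in each turn of the epoch the Dealer draws a uniformly random card of (remaining deck)$\setminus B$, and after the Guesser's guess $g$ in that turn, if $g$ is still in the remaining deck and $|B|<u$, then $g$ is added to $B$; (3) when $2m\log n$ cards remain, it draws uniformly random cards from the remaining deck until the end. A guess during an epoch is reasonable if it is a card of (remaining deck)$\setminus B$ at that turn. Expectations are over the randomness of both players. $\log$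 is base 2. *)

theory Defs
  imports "HOL-Probability.Probability"
begin

definition k1 :: "nat \<Rightarrow> nat" where
  "k1 n = nat \<lfloor>real n / (8 * exp 1 * log 2 (real n))\<rfloor>"

definition ell :: "nat \<Rightarrow> nat \<Rightarrow> nat" where
  "ell n m = nat \<lfloor>real m * log 2 (real n)\<rfloor>"

definition uu :: "nat \<Rightarrow> nat \<Rightarrow> nat" where
  "uu n m = ell n m"

definition dd :: "nat \<Rightarrow> nat \<Rightarrow> nat" where
  "dd n m = nat \<lfloor>(real (k1 n) - 2 * real m * log 2 (real n)) / real (ell n m)\<rfloor>"

definition kk :: "nat \<Rightarrow> nat \<Rightarrow> nat \<Rightarrow> nat" where
  "kk n m i = k1 n - (i - 1) * ell n m"

text \<open>The turn at which r cards remain belongs to epoch i.\<close>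
definition in_epoch :: "nat \<Rightarrow> nat \<Rightarrow> nat \<Rightarrow> nat \<Rightarrow> bool" where
  "in_epoch n m i r \<longleftrightarrow> 1 \<le> i \<and> i \<le> dd n m \<and> kk n m i - ell n m < r \<and> r \<le> kk n m i"

definition epoch_turn :: "nat \<Rightarrow> nat \<Rightarrow> nat \<Rightarrow> bool" where
  "epoch_turn n m r \<longleftrightarrow> (\<exists>i. in_epoch n m i r)"

definition epoch_start :: "nat \<Rightarrow> nat \<Rightarrow> nat \<Rightarrow> bool" where
  "epoch_start n m r \<longleftrightarrow> (\<exists>i. 1 \<le> i \<and> i \<le> dd n m \<and> r = kk n m i)"

text \<open>Game configuration: (remaining deck, set B, Guesser memory, history).
  The history records, per turn, (cards remaining, guess, drawn card, guess reasonable).\<close>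
type_synonym config = "nat set \<times> nat set \<times> bool list \<times> (nat \<times> nat \<times> nat \<times> bool) list"

definition step :: "nat \<Rightarrow> nat \<Rightarrow> (bool list \<Rightarrow> nat pmf) \<Rightarrow> (bool list \<Rightarrow> nat \<Rightarrow> bool list pmf)
    \<Rightarrow> config \<Rightarrow> config pmf" where
  "step n m G T cf = (case cf of (D, B, s, h) \<Rightarrow>
     (let B0 = (if epoch_start n m (card D) then {} else B);
          ep = epoch_turn n m (card D)
      in do {
        c \<leftarrow> (if ep then pmf_of_set (D - B0) else pmf_of_set D);
        g \<leftarrow> G s;
        s' \<leftarrow> T s c;
        return_pmf (D - {c},
                    (if ep \<and> g \<in> D - {c} \<and> card B0 < uu n m then insert g B0 else B0),
                    s',
                    h @ [(card D, g, c, ep \<and> g \<in> D - B0)])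
      }))"

definition game :: "nat \<Rightarrow> nat \<Rightarrow> (bool list \<Rightarrow> nat pmf) \<Rightarrow> (bool list \<Rightarrow> nat \<Rightarrow> bool list pmf)
    \<Rightarrow> bool list \<Rightarrow> config pmf" where
  "game n m G T s0 = ((\<lambda>p. bind_pmf p (step n m G T)) ^^ n) (return_pmf ({1..n}, {}, s0, []))"

definition correct_exp :: "nat \<Rightarrow> nat \<Rightarrow> (bool list \<Rightarrow> nat pmf) \<Rightarrow> (bool list \<Rightarrow> nat \<Rightarrow> bool list pmf)
    \<Rightarrow> bool list \<Rightarrow> nat \<Rightarrow> real" where
  "correct_exp n m G T s0 i = measure_pmf.expectation (game n m G T s0)
     (\<lambda>(D, B, s, h). real (length (filter (\<lambda>(r, g, c, rs). in_epoch n m i r \<and> g = c) h)))"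

definition reasonable_exp :: "nat \<Rightarrow> nat \<Rightarrow> (bool list \<Rightarrow> nat pmf) \<Rightarrow> (bool list \<Rightarrow> nat \<Rightarrow> bool list pmf)
    \<Rightarrow> bool list \<Rightarrow> nat \<Rightarrow> real" where
  "reasonable_exp n m G T s0 i = measure_pmf.expectation (game n m G T s0)
     (\<lambda>(D, B, s, h). real (length (filter (\<lambda>(r, g, c, rs). in_epoch n m i r \<and> rs) h)))"

end

theory Submission
  imports Defs
begin


lemma count_enn: "ennreal (real (length (filter P h))) = sum_list (map (\<lambda>e. if P e then 1 else 0) h)"
  by (induction h) (auto simp: ennreal_plus[symmetric] add.commute)

lemma step_nn:
  fixes w :: "nat \<times> nat \<times> nat \<times> bool \<Rightarrow> ennreal"
  shows "(\<integral>\<^sup>+x. sum_list (map w (snd (snd (snd x)))) \<partial>step n m G T (D,B,s,h)) =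
    sum_list (map w h) + (\<integral>\<^sup>+c. \<integral>\<^sup>+g. w (card D, g, c, epoch_turn n m (card D) \<and> g \<in> D - (if epoch_start n m (card D) then {} else B)) \<partial>G s
       \<partial>(if epoch_turn n m (card D) then pmf_of_set (D - (if epoch_start n m (card D) then {} else B)) else pmf_of_set D))"
  unfolding step_def Let_def
  by (simp add: nn_integral_add measure_pmf.emeasure_space_1 nn_integral_const)



lemma arith_kk:
  assumes "1 \<le> i" "i \<le> dd n m"
  shows "1 \<le> ell n m" "(i - 1) * ell n m \<le> k1 n" "real (kk n m i) \<ge> 3 * real (ell n m)"
proof -
  define L where "L = real m * log 2 (real n)"
  have ell: "ell n m = nat \<lfloor>L\<rfloor>" unfolding ell_def L_def by simp
  have d: "dd n m = nat \<lfloor>(real (k1 n) - 2 * L) / real (ell n m)\<rfloor>" unfolding dd_def L_def by (simp add: mult.assoc)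
  have dpos: "dd n m \<ge> 1" using assms by simp
  show lpos: "1 \<le> ell n m"
  proof (rule ccontr)
    assume "\<not> 1 \<le> ell n m"
    then have "ell n m = 0" by simp
    then have "dd n m = 0" using d by simp
    then show False using dpos by simp
  qed
  have lL: "real (ell n m) \<le> L" using lpos ell by linarith
  have "real (dd n m) \<le> (real (k1 n) - 2 * L) / real (ell n m)" using d dpos by linarith
  then have dl: "real (dd n m) * real (ell n m) \<le> real (k1 n) - 2 * L" using lpos by (simp add: le_divide_eq)
  have "real ((i - 1) * ell n m) \<le> real (dd n m) * real (ell n m)" using assms
    by (simp add: mult_right_mono)
  moreover have "real (ell n m) \<ge> 1" using lpos by simp
  ultimately have A: "real ((i - 1) * ell n m) + real (ell n m) \<le> real (k1 n) - 2 * L"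
  proof -
    have "real ((i - 1) * ell n m) + real (ell n m) = real i * real (ell n m)" using assms
      by (simp add: of_nat_diff algebra_simps)
    also have "\<dots> \<le> real (dd n m) * real (ell n m)" using assms by (simp add: mult_right_mono)
    finally show ?thesis using dl by linarith
  qed
  then have "real ((i - 1) * ell n m) \<le> real (k1 n)" using lL lpos by linarith
  then show "(i - 1) * ell n m \<le> k1 n" by (simp only: of_nat_le_iff)
  then have "real (kk n m i) = real (k1 n) - real ((i - 1) * ell n m)" unfolding kk_def by (simp add: of_nat_diff)
  then show "real (kk n m i) \<ge> 3 * real (ell n m)" using A lL by linarith
qed



lemma in_epoch_bound:
  assumes "in_epoch n m i r"
  shows "real r \<ge> real (kk n m i) - real (ell n m) + 1" "real (kk n m i) \<ge> 3 * real (ell n m)" "1 \<le> ell n m"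
proof -
  have i: "1 \<le> i" "i \<le> dd n m" and r: "kk n m i - ell n m < r" using assms unfolding in_epoch_def by auto
  show k: "real (kk n m i) \<ge> 3 * real (ell n m)" "1 \<le> ell n m" using arith_kk[OF i] by auto
  have "kk n m i - ell n m + 1 \<le> r" using r by simp
  then have "real (kk n m i - ell n m) + 1 \<le> real r" by linarith
  moreover have "real (kk n m i - ell n m) = real (kk n m i) - real (ell n m)" using k by (simp add: of_nat_diff)
  ultimately show "real r \<ge> real (kk n m i) - real (ell n m) + 1" by simp
qed

lemma epoch_turn_big: "epoch_turn n m r \<Longrightarrow> r > uu n m"
  unfolding epoch_turn_def uu_def using in_epoch_bound by fastforce

lemma per_step:
  fixes K :: real and G :: "bool list \<Rightarrow> nat pmf"
  assumes "finite D" "finite B" "card B \<le> uu n m" "K = real (kk n m i) - real (ell n m) - real (uu n m)"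
  defines "B0 \<equiv> (if epoch_start n m (card D) then {} else B)"
  shows "ennreal K * (\<integral>\<^sup>+c. \<integral>\<^sup>+g. (if in_epoch n m i (card D) \<and> g = c then 1 else 0) \<partial>G s
       \<partial>(if epoch_turn n m (card D) then pmf_of_set (D - B0) else pmf_of_set D))
    \<le> (\<integral>\<^sup>+c. \<integral>\<^sup>+g. (if in_epoch n m i (card D) \<and> (epoch_turn n m (card D) \<and> g \<in> D - B0) then 1 else 0) \<partial>G s
       \<partial>(if epoch_turn n m (card D) then pmf_of_set (D - B0) else pmf_of_set D))"
proof (cases "in_epoch n m i (card D)")
  case False
  then show ?thesis by simp
next
  case True
  have ep: "epoch_turn n m (card D)" using True unfolding epoch_turn_def by blast
  define S where "S = D - B0"
  have fS: "finite S" using assms(1) unfolding S_def by simp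
  have cB0: "card B0 \<le> uu n m" using assms(3) unfolding B0_def by simp
  have "card D - card B0 \<le> card S" unfolding S_def by (rule diff_card_le_card_Diff) (use assms(1) B0_def assms(2) in auto)
  then have cS: "real (card S) \<ge> real (card D) - real (uu n m)" using cB0 by linarith
  have b: "real (card D) \<ge> real (kk n m i) - real (ell n m) + 1" "real (kk n m i) \<ge> 3 * real (ell n m)" "1 \<le> ell n m"
    using in_epoch_bound[OF True] by auto
  have KS: "K + 1 \<le> real (card S)" using cS b assms(4) by linarith
  have K0: "K \<ge> 1" using b assms(4) unfolding uu_def by linarith
  have Sne: "S \<noteq> {}" using KS K0 by auto
  define Y where "Y = (\<Sum>c\<in>S. pmf (G s) c)"
  have Y0: "Y \<ge> 0" unfolding Y_def by (simp add: sum_nonneg)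
  have L: "(\<integral>\<^sup>+c. \<integral>\<^sup>+g. (if in_epoch n m i (card D) \<and> g = c then 1 else 0) \<partial>G s
       \<partial>(if epoch_turn n m (card D) then pmf_of_set (D - B0) else pmf_of_set D))
     = ennreal Y / ennreal (real (card S))"
  proof -
    have "\<And>c. (\<integral>\<^sup>+g. (if in_epoch n m i (card D) \<and> g = c then 1 else 0) \<partial>G s) = ennreal (pmf (G s) c)"
    proof -
      fix c
      have "(\<integral>\<^sup>+g. (if in_epoch n m i (card D) \<and> g = c then 1 else 0) \<partial>G s) = (\<integral>\<^sup>+g. indicator {c} g \<partial>G s)"
        using True by (intro nn_integral_cong) (auto simp: indicator_def)
      also have "\<dots> = ennreal (pmf (G s) c)" by (simp add: emeasure_pmf_single)
      finally show "?thesis c" .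
    qed
    then have "(\<integral>\<^sup>+c. \<integral>\<^sup>+g. (if in_epoch n m i (card D) \<and> g = c then 1 else 0) \<partial>G s
       \<partial>(if epoch_turn n m (card D) then pmf_of_set (D - B0) else pmf_of_set D))
       = (\<integral>\<^sup>+c. ennreal (pmf (G s) c) \<partial>pmf_of_set S)" using ep S_def by simp
    also have "\<dots> = (\<Sum>c\<in>S. ennreal (pmf (G s) c)) / of_nat (card S)"
      using fS Sne by (simp add: nn_integral_pmf_of_set)
    also have "\<dots> = ennreal Y / ennreal (real (card S))" unfolding Y_def by (simp add: ennreal_of_nat_eq_real_of_nat)
    finally show ?thesis .
  qed
  have R: "(\<integral>\<^sup>+c. \<integral>\<^sup>+g. (if in_epoch n m i (card D) \<and> (epoch_turn n m (card D) \<and> g \<in> D - B0) then 1 else 0) \<partial>G s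
       \<partial>(if epoch_turn n m (card D) then pmf_of_set (D - B0) else pmf_of_set D)) = ennreal Y"
  proof -
    have "(\<integral>\<^sup>+g. (if in_epoch n m i (card D) \<and> (epoch_turn n m (card D) \<and> g \<in> D - B0) then 1 else 0) \<partial>G s)
       = (\<integral>\<^sup>+g. indicator S g \<partial>G s)"
      using True ep S_def by (intro nn_integral_cong) (auto simp: indicator_def)
    also have "\<dots> = ennreal Y" using fS unfolding Y_def
      by (simp add: emeasure_measure_pmf_finite)
    finally have e: "(\<integral>\<^sup>+g. (if in_epoch n m i (card D) \<and> (epoch_turn n m (card D) \<and> g \<in> D - B0) then 1 else 0) \<partial>G s) = ennreal Y" .
    show ?thesis unfolding e by (simp add: measure_pmf.emeasure_space_1)
  qed
  have "ennreal K * (ennreal Y / ennreal (real (card S))) = ennreal (K * (Y / real (card S)))"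
    using K0 Y0 KS by (simp add: divide_ennreal ennreal_mult'[symmetric])
  also have "\<dots> \<le> ennreal Y"
  proof (rule ennreal_leI)
    have "K * (Y / real (card S)) = Y * (K / real (card S))" by simp
    also have "\<dots> \<le> Y * 1" using Y0 KS K0 by (intro mult_left_mono) auto
    finally show "K * (Y / real (card S)) \<le> Y" by simp
  qed
  finally show ?thesis using L R by simp
qed



definition inv :: "nat \<Rightarrow> nat \<Rightarrow> nat \<Rightarrow> config \<Rightarrow> bool" where
  "inv n m t x = (case x of (D,B,s,h) \<Rightarrow> finite D \<and> card D = n - t \<and> finite B \<and> card B \<le> uu n m \<and> length h = t)"

lemma inv_step:
  assumes "inv n m t (D,B,s,h)" "t < n" "x' \<in> set_pmf (step n m G T (D,B,s,h))"
  shows "inv n m (Suc t) x'"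
proof -
  define B0 where "B0 = (if epoch_start n m (card D) then {} else B)"
  have fD: "finite D" and cD: "card D = n - t" and fB: "finite B" and cB: "card B \<le> uu n m" and lh: "length h = t"
    using assms(1) unfolding inv_def by auto
  have fB0: "finite B0" and cB0: "card B0 \<le> uu n m" using fB cB unfolding B0_def by auto
  define C where "C = (if epoch_turn n m (card D) then pmf_of_set (D - B0) else pmf_of_set D)"
  have Dne: "D \<noteq> {}" using cD assms(2) by auto
  have CD: "set_pmf C \<subseteq> D"
  proof (cases "epoch_turn n m (card D)")
    case True
    have "card D > uu n m" using epoch_turn_big[OF True] .
    then have cc: "card D > card B0" using cB0 by linarith
    have "D - B0 \<noteq> {}"
    proof
      assume "D - B0 = {}"
      then have "D \<subseteq> B0" by blast
      then have "card D \<le> card B0" using fB0 by (simp add: card_mono)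
      then show False using cc by linarith
    qed
    then show ?thesis using True fD unfolding C_def by auto
  next
    case False
    then show ?thesis using Dne fD unfolding C_def by auto
  qed
  have stp: "step n m G T (D,B,s,h) = bind_pmf C (\<lambda>c. bind_pmf (G s) (\<lambda>g. bind_pmf (T s c) (\<lambda>s'. return_pmf (D - {c}, (if epoch_turn n m (card D) \<and> g \<in> D - {c} \<and> card B0 < uu n m then insert g B0 else B0), s',
                    h @ [(card D, g, c, epoch_turn n m (card D) \<and> g \<in> D - B0)]))))"
    unfolding step_def Let_def B0_def C_def by simp
  from assms(3) obtain c g s' where c: "c \<in> set_pmf C" and
    x': "x' = (D - {c}, (if epoch_turn n m (card D) \<and> g \<in> D - {c} \<and> card B0 < uu n m then insert g B0 else B0), s',
                    h @ [(card D, g, c, epoch_turn n m (card D) \<and> g \<in> D - B0)])"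
    unfolding stp set_bind_pmf set_return_pmf by blast
  have "c \<in> D" using c CD by auto
  then have "card (D - {c}) = n - Suc t" using cD fD by simp
  moreover have "card (if epoch_turn n m (card D) \<and> g \<in> D - {c} \<and> card B0 < uu n m then insert g B0 else B0) \<le> uu n m"
    using cB0 fB0 by (auto simp: card_insert_if)
  ultimately show ?thesis unfolding x' inv_def using fD fB0 lh by auto
qed



lemma main_ind:
  fixes K :: real and G :: "bool list \<Rightarrow> nat pmf" and T :: "bool list \<Rightarrow> nat \<Rightarrow> bool list pmf" and zz :: "bool list"
  assumes "K = real (kk n m i) - real (ell n m) - real (uu n m)"
  defines "pp \<equiv> \<lambda>t. ((\<lambda>p. bind_pmf p (step n m G T)) ^^ t) (return_pmf ({1..n}, {}, zz, []))"
  defines "wC \<equiv> (\<lambda>e. if (case e of (r, g, c, rs) \<Rightarrow> in_epoch n m i r \<and> g = c) then 1 else 0 :: ennreal)"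
  defines "wR \<equiv> (\<lambda>e. if (case e of (r, g, c, rs) \<Rightarrow> in_epoch n m i r \<and> rs) then 1 else 0 :: ennreal)"
  shows "t \<le> n \<Longrightarrow> (\<forall>x\<in>set_pmf (pp t). inv n m t x) \<and>
     ennreal K * (\<integral>\<^sup>+x. sum_list (map wC (snd (snd (snd x)))) \<partial>pp t)
       \<le> (\<integral>\<^sup>+x. sum_list (map wR (snd (snd (snd x)))) \<partial>pp t)"
proof (induction t)
  case 0
  show ?case unfolding pp_def by (simp add: inv_def)
next
  case (Suc t)
  then have IH: "\<forall>x\<in>set_pmf (pp t). inv n m t x"
    "ennreal K * (\<integral>\<^sup>+x. sum_list (map wC (snd (snd (snd x)))) \<partial>pp t)
       \<le> (\<integral>\<^sup>+x. sum_list (map wR (snd (snd (snd x)))) \<partial>pp t)" and tn: "t < n" by auto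
  have ppS: "pp (Suc t) = bind_pmf (pp t) (step n m G T)" unfolding pp_def by simp
  have inv': "\<forall>x\<in>set_pmf (pp (Suc t)). inv n m (Suc t) x"
  proof
    fix x assume "x \<in> set_pmf (pp (Suc t))"
    then obtain y where y: "y \<in> set_pmf (pp t)" "x \<in> set_pmf (step n m G T y)" unfolding ppS by auto
    obtain D B s h where yy: "y = (D,B,s,h)" by (cases y) auto
    show "inv n m (Suc t) x" using inv_step[of n m t D B s h x G T] IH(1) y tn unfolding yy by blast
  qed
  define aC where "aC = (\<lambda>x::config. case x of (D,B,s,h) \<Rightarrow> (\<integral>\<^sup>+c. \<integral>\<^sup>+g. wC (card D, g, c, epoch_turn n m (card D) \<and> g \<in> D - (if epoch_start n m (card D) then {} else B)) \<partial>G s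
       \<partial>(if epoch_turn n m (card D) then pmf_of_set (D - (if epoch_start n m (card D) then {} else B)) else pmf_of_set D)))"
  define aR where "aR = (\<lambda>x::config. case x of (D,B,s,h) \<Rightarrow> (\<integral>\<^sup>+c. \<integral>\<^sup>+g. wR (card D, g, c, epoch_turn n m (card D) \<and> g \<in> D - (if epoch_start n m (card D) then {} else B)) \<partial>G s
       \<partial>(if epoch_turn n m (card D) then pmf_of_set (D - (if epoch_start n m (card D) then {} else B)) else pmf_of_set D)))"
  have stepE: "\<And>w x. (\<integral>\<^sup>+y. sum_list (map w (snd (snd (snd y)))) \<partial>step n m G T x) =
      sum_list (map w (snd (snd (snd x)))) + (case x of (D,B,s,h) \<Rightarrow> (\<integral>\<^sup>+c. \<integral>\<^sup>+g. w (card D, g, c, epoch_turn n m (card D) \<and> g \<in> D - (if epoch_start n m (card D) then {} else B)) \<partial>G s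
       \<partial>(if epoch_turn n m (card D) then pmf_of_set (D - (if epoch_start n m (card D) then {} else B)) else pmf_of_set D)))"
  proof -
    fix w :: "nat \<times> nat \<times> nat \<times> bool \<Rightarrow> ennreal" and x :: config
    obtain D B s h where x: "x = (D,B,s,h)" by (cases x) auto
    show "?thesis w x" unfolding x by (simp only: step_nn prod.case snd_conv)
  qed
  have EC: "(\<integral>\<^sup>+x. sum_list (map wC (snd (snd (snd x)))) \<partial>pp (Suc t)) =
     (\<integral>\<^sup>+x. sum_list (map wC (snd (snd (snd x)))) \<partial>pp t) + (\<integral>\<^sup>+x. aC x \<partial>pp t)"
    unfolding ppS nn_integral_bind_pmf stepE unfolding aC_def by (rule nn_integral_add) auto
  have ER: "(\<integral>\<^sup>+x. sum_list (map wR (snd (snd (snd x)))) \<partial>pp (Suc t)) =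
     (\<integral>\<^sup>+x. sum_list (map wR (snd (snd (snd x)))) \<partial>pp t) + (\<integral>\<^sup>+x. aR x \<partial>pp t)"
    unfolding ppS nn_integral_bind_pmf stepE unfolding aR_def by (rule nn_integral_add) auto
  have pw: "ennreal K * aC x \<le> aR x" if "x \<in> set_pmf (pp t)" for x
  proof -
    obtain D B s h where x: "x = (D,B,s,h)" by (cases x) auto
    have "inv n m t x" using IH(1) that by auto
    then have "finite D" "finite B" "card B \<le> uu n m" unfolding x inv_def by auto
    from per_step[OF this assms(1), of G s]
    show ?thesis unfolding x aC_def aR_def wC_def wR_def by simp
  qed
  have "(\<integral>\<^sup>+x. ennreal K * aC x \<partial>pp t) \<le> (\<integral>\<^sup>+x. aR x \<partial>pp t)"
    by (rule nn_integral_mono_AE) (use pw in \<open>auto simp: AE_measure_pmf_iff\<close>)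
  then have a: "ennreal K * (\<integral>\<^sup>+x. aC x \<partial>pp t) \<le> (\<integral>\<^sup>+x. aR x \<partial>pp t)"
    by (simp add: nn_integral_cmult)
  have "ennreal K * (\<integral>\<^sup>+x. sum_list (map wC (snd (snd (snd x)))) \<partial>pp (Suc t))
       \<le> (\<integral>\<^sup>+x. sum_list (map wR (snd (snd (snd x)))) \<partial>pp (Suc t))"
    unfolding EC ER distrib_left using IH(2) a by (rule add_mono)
  with inv' show ?case by blast
qed



lemma sum_list_le_length: "(\<And>e. w e \<le> 1) \<Longrightarrow> sum_list (map w h) \<le> (of_nat (length h) :: ennreal)"
  by (induction h) (auto intro: add_mono)

theorem mainTheorem11:
  fixes n m i :: nat
    and G :: "bool list \<Rightarrow> nat pmf"
    and T :: "bool list \<Rightarrow> nat \<Rightarrow> bool list pmf"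
    and s0 :: "bool list"
  assumes "1 \<le> m"
    and "real m \<le> real n / (log 2 (real n))^2"
    and "length s0 = m"
    and "\<And>s. length s = m \<Longrightarrow> set_pmf (G s) \<subseteq> {1..n}"
    and "\<And>s c. length s = m \<Longrightarrow> set_pmf (T s c) \<subseteq> {s'. length s' = m}"
    and "1 \<le> i" and "i \<le> dd n m"
  shows "correct_exp n m G T s0 i
           \<le> reasonable_exp n m G T s0 i / (real (kk n m i) - real (ell n m) - real (uu n m))"
proof -
  define K where "K = real (kk n m i) - real (ell n m) - real (uu n m)"
  have ak: "1 \<le> ell n m" "real (kk n m i) \<ge> 3 * real (ell n m)" using arith_kk[OF assms(6,7)] by auto
  have K1: "K \<ge> 1" using ak unfolding K_def uu_def by linarith
  define wC :: "nat \<times> nat \<times> nat \<times> bool \<Rightarrow> ennreal" where "wC = (\<lambda>e. if (case e of (r, g, c, rs) \<Rightarrow> in_epoch n m i r \<and> g = c) then 1 else 0 :: ennreal)"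
  define wR :: "nat \<times> nat \<times> nat \<times> bool \<Rightarrow> ennreal" where "wR = (\<lambda>e. if (case e of (r, g, c, rs) \<Rightarrow> in_epoch n m i r \<and> rs) then 1 else 0 :: ennreal)"
  define A where "A = (\<integral>\<^sup>+x. sum_list (map wC (snd (snd (snd x)))) \<partial>game n m G T s0)"
  define Bv where "Bv = (\<integral>\<^sup>+x. sum_list (map wR (snd (snd (snd x)))) \<partial>game n m G T s0)"
  from main_ind[OF K_def, where G=G and T=T and zz=s0 and t=n]
  have MI: "\<forall>x\<in>set_pmf (game n m G T s0). inv n m n x" "ennreal K * A \<le> Bv"
    unfolding A_def Bv_def wC_def wR_def game_def by auto
  have cA: "correct_exp n m G T s0 i = enn2real A"
    unfolding correct_exp_def A_def
    by (subst integral_eq_nn_integral) (auto intro!: arg_cong[where f=enn2real] nn_integral_cong simp: count_enn wC_def split: prod.splits)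
  have cB: "reasonable_exp n m G T s0 i = enn2real Bv"
    unfolding reasonable_exp_def Bv_def
    by (subst integral_eq_nn_integral) (auto intro!: arg_cong[where f=enn2real] nn_integral_cong simp: count_enn wR_def split: prod.splits)
  have "Bv \<le> (\<integral>\<^sup>+x. of_nat n \<partial>game n m G T s0)"
    unfolding Bv_def
  proof (rule nn_integral_mono_AE)
    show "AE x in measure_pmf (game n m G T s0). sum_list (map wR (snd (snd (snd x)))) \<le> of_nat n"
    proof (rule AE_pmfI)
      fix x assume "x \<in> set_pmf (game n m G T s0)"
      then have ix: "inv n m n x" using MI(1) by blast
      obtain D B s h where xx: "x = (D,B,s,h)" by (cases x) auto
      have "length (snd (snd (snd x))) = n" using ix unfolding xx inv_def by simp
      then show "sum_list (map wR (snd (snd (snd x)))) \<le> of_nat n"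
        using sum_list_le_length[of wR "snd (snd (snd x))"] unfolding wR_def by auto
    qed
  qed
  also have "\<dots> = of_nat n" by (simp add: measure_pmf.emeasure_space_1)
  finally have Bfin: "Bv < top" using of_nat_less_top[of n] order_le_less_trans by blast
  have "K * enn2real A = enn2real (ennreal K * A)" using K1 by (simp add: enn2real_mult)
  also have "\<dots> \<le> enn2real Bv" using MI(2) Bfin by (rule enn2real_mono)
  finally have "K * enn2real A \<le> enn2real Bv" .
  then have "enn2real A \<le> enn2real Bv / K" using K1 by (simp add: le_divide_eq mult.commute)
  then show ?thesis unfolding cA cB K_def .
qed


end
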